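(* Let $k, n \in \mathbb{N}$ with $k$ odd and $k \le 2n$. Color every edge of the complete bipartite graph $K_{2n,2n}$ red or blue so that every vertex is incident with exactly $n$ red edges and exactly $n$ blue edges. Then $K_{2n,2n}$ has a perfect matching consisting of exactly $k$ red edges and $2n-k$ blue edges if and only if the graph of blue edges is connected.
   Context: The graph of blue edges is the spanning subgraph of $K_{2n,2n}$ on all $4n$ vertices whose edge set is the set of blue edges. *)

theory Defs
  imports Main
begin

text \<open>K_{2n,2n}: left vertices i < 2n, right vertices j < 2n; edge (i,j) for every pair.
  A red/blue colouring is a predicate blue :: nat => nat => bool; edge (i,j) is red iff not blue i j.\<close>

definition balanced_colouring :: "nat \<Rightarrow> (nat \<Rightarrow> nat \<Rightarrow> bool) \<Rightarrow> bool" where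
  "balanced_colouring n blue \<longleftrightarrow>
     (\<forall>i<2*n. card {j. j < 2*n \<and> blue i j} = n \<and> card {j. j < 2*n \<and> \<not> blue i j} = n) \<and>
     (\<forall>j<2*n. card {i. i < 2*n \<and> blue i j} = n \<and> card {i. i < 2*n \<and> \<not> blue i j} = n)"

definition perfect_matching :: "nat \<Rightarrow> (nat \<times> nat) set \<Rightarrow> bool" where
  "perfect_matching n M \<longleftrightarrow>
     M \<subseteq> {..<2*n} \<times> {..<2*n} \<and>
     (\<forall>i<2*n. \<exists>!j. (i, j) \<in> M) \<and>
     (\<forall>j<2*n. \<exists>!i. (i, j) \<in> M)"

definition bip_verts :: "nat \<Rightarrow> (nat + nat) set" where
  "bip_verts n = Inl ` {..<2*n} \<union> Inr ` {..<2*n}"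

fun blue_adj :: "nat \<Rightarrow> (nat \<Rightarrow> nat \<Rightarrow> bool) \<Rightarrow> nat + nat \<Rightarrow> nat + nat \<Rightarrow> bool" where
  "blue_adj n blue (Inl i) (Inr j) = (i < 2*n \<and> j < 2*n \<and> blue i j)"
| "blue_adj n blue (Inr j) (Inl i) = (i < 2*n \<and> j < 2*n \<and> blue i j)"
| "blue_adj n blue _ _ = False"

definition blue_graph_connected :: "nat \<Rightarrow> (nat \<Rightarrow> nat \<Rightarrow> bool) \<Rightarrow> bool" where
  "blue_graph_connected n blue \<longleftrightarrow>
     (\<forall>u\<in>bip_verts n. \<forall>v\<in>bip_verts n. (blue_adj n blue)\<^sup>*\<^sup>* u v)"

end

theory Submission
  imports Defs "HOL-Combinatorics.Permutations"
begin

definition bal :: "nat \<Rightarrow> (nat \<Rightarrow> nat \<Rightarrow> bool) \<Rightarrow> bool" where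
  "bal n c \<longleftrightarrow>
     (\<forall>i<2*n. card {j. j < 2*n \<and> c i j} = n \<and> card {j. j < 2*n \<and> \<not> c i j} = n) \<and>
     (\<forall>j<2*n. card {i. i < 2*n \<and> c i j} = n \<and> card {i. i < 2*n \<and> \<not> c i j} = n)"

definition Rc :: "nat \<Rightarrow> (nat \<Rightarrow> nat \<Rightarrow> bool) \<Rightarrow> (nat \<Rightarrow> nat) \<Rightarrow> nat" where
  "Rc n c p = card {i. i < 2*n \<and> c i (p i)}"

definition blockc :: "nat \<Rightarrow> (nat \<Rightarrow> nat \<Rightarrow> bool) \<Rightarrow> bool" where
  "blockc n c \<longleftrightarrow> (\<exists>X Y. \<forall>i<2*n. \<forall>j<2*n. c i j \<longleftrightarrow> (i \<in> X \<longleftrightarrow> j \<in> Y))"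

lemma bal_blue: "balanced_colouring n blue \<Longrightarrow> bal n blue"
  unfolding balanced_colouring_def bal_def by blast

lemma bal_neg: "bal n c \<Longrightarrow> bal n (\<lambda>i j. \<not> c i j)"
  unfolding bal_def by auto

lemma blockc_neg: "blockc n c \<Longrightarrow> blockc n (\<lambda>i j. \<not> c i j)"
  unfolding blockc_def
proof (elim exE)
  fix X Y assume h: "\<forall>i<2*n. \<forall>j<2*n. c i j \<longleftrightarrow> (i \<in> X \<longleftrightarrow> j \<in> Y)"
  show "\<exists>X Y. \<forall>i<2*n. \<forall>j<2*n. (\<not> c i j) \<longleftrightarrow> (i \<in> X \<longleftrightarrow> j \<in> Y)"
    by (rule exI[of _ X], rule exI[of _ "- Y"]) (use h in auto)
qed

lemma card_perm_pre:
  fixes n :: nat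
  assumes "p permutes {..<2*n}"
  shows "card {b. b < 2*n \<and> P (p b)} = card {j. j < 2*n \<and> P j}"
proof -
  have "p ` {b. b < 2*n \<and> P (p b)} = {j. j < 2*n \<and> P j}"
  proof
    show "p ` {b. b < 2*n \<and> P (p b)} \<subseteq> {j. j < 2*n \<and> P j}"
      using permutes_in_image[OF assms] by auto
    show "{j. j < 2*n \<and> P j} \<subseteq> p ` {b. b < 2*n \<and> P (p b)}"
    proof
      fix j assume j: "j \<in> {j. j < 2*n \<and> P j}"
      have "p (inv p j) = j" using permutes_inverses(1)[OF assms] by simp
      moreover have "inv p j < 2*n" using j permutes_in_image[OF permutes_inv[OF assms]] by auto
      ultimately show "j \<in> p ` {b. b < 2*n \<and> P (p b)}" using j by (metis (mono_tags, lifting) image_eqI mem_Collect_eq)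
    qed
  qed
  moreover have "inj_on p {b. b < 2*n \<and> P (p b)}"
    using permutes_inj_on[OF assms] by (meson inj_on_subset subset_UNIV)
  ultimately show ?thesis by (metis card_image)
qed

lemma swap_Rc:
  fixes n :: nat
  assumes y: "y < 2*n" and u: "u < 2*n" and yu: "y \<noteq> u"
    and sy: "c y (p u) = c y (p y)" and nu: "\<not> c u (p u)"
  shows "c u (p y) \<Longrightarrow> Rc n c (p \<circ> Transposition.transpose y u) = Suc (Rc n c p)"
    and "\<not> c u (p y) \<Longrightarrow> Rc n c (p \<circ> Transposition.transpose y u) = Rc n c p"
proof -
  assume cu: "c u (p y)"
  have "{i. i < 2*n \<and> c i ((p \<circ> Transposition.transpose y u) i)} = insert u {i. i < 2*n \<and> c i (p i)}"
    using y u yu sy nu cu by (auto simp: transpose_def)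
  moreover have "u \<notin> {i. i < 2*n \<and> c i (p i)}" using nu by auto
  ultimately show "Rc n c (p \<circ> Transposition.transpose y u) = Suc (Rc n c p)"
    unfolding Rc_def by simp
next
  assume cu: "\<not> c u (p y)"
  have "{i. i < 2*n \<and> c i ((p \<circ> Transposition.transpose y u) i)} = {i. i < 2*n \<and> c i (p i)}"
    using y u yu sy nu cu by (auto simp: transpose_def)
  then show "Rc n c (p \<circ> Transposition.transpose y u) = Rc n c p"
    unfolding Rc_def by simp
qed

lemma path_improve:
  fixes n :: nat
  shows "1 \<le> m \<Longrightarrow> p permutes {..<2*n} \<Longrightarrow> (\<forall>i\<le>m. x i < 2*n) \<Longrightarrow> inj_on x {..m} \<Longrightarrow>
    (\<forall>i<m. c (x i) (p (x (Suc i))) = c (x i) (p (x i))) \<Longrightarrow>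
    \<not> c (x m) (p (x m)) \<Longrightarrow> c (x m) (p (x 0)) \<Longrightarrow>
    \<exists>q. q permutes {..<2*n} \<and> Rc n c q = Suc (Rc n c p)"
proof (induction m arbitrary: p x)
  case 0
  then show ?case by simp
next
  case (Suc m)
  define y where "y = x m"
  define u where "u = x (Suc m)"
  define q where "q = p \<circ> Transposition.transpose y u"
  have yV: "y < 2*n" and uV: "u < 2*n" using Suc.prems(3) by (auto simp: y_def u_def)
  have yu: "y \<noteq> u" using Suc.prems(4) unfolding y_def u_def inj_on_def by fastforce
  have sy: "c y (p u) = c y (p y)" using Suc.prems(5) by (simp add: y_def u_def)
  have nu: "\<not> c u (p u)" using Suc.prems(6) by (simp add: u_def)
  have qperm: "q permutes {..<2*n}" unfolding q_def
    by (rule permutes_compose[OF permutes_swap_id Suc.prems(2)]) (use yV uV in auto)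
  show ?case
  proof (cases "c u (p y)")
    case True
    then show ?thesis using swap_Rc(1)[of y n u c p, OF yV uV yu sy nu True] qperm q_def by blast
  next
    case False
    have m1: "1 \<le> m"
    proof (rule ccontr)
      assume "\<not> 1 \<le> m" then have "m = 0" by simp
      then have "y = x 0" by (simp add: y_def)
      then show False using False Suc.prems(7) by (simp add: u_def)
    qed
    have Rq: "Rc n c q = Rc n c p" using swap_Rc(2)[of y n u c p, OF yV uV yu sy nu False] q_def by simp
    define x' where "x' = x(m := u)"
    have inj: "\<And>i j. i \<le> Suc m \<Longrightarrow> j \<le> Suc m \<Longrightarrow> x i = x j \<Longrightarrow> i = j"
      using Suc.prems(4) unfolding inj_on_def by blast
    have qx: "\<And>i. i < m \<Longrightarrow> q (x i) = p (x i)"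
    proof -
      fix i assume i: "i < m"
      have "x i \<noteq> y" using inj[of i m] i by (auto simp: y_def)
      moreover have "x i \<noteq> u" using inj[of i "Suc m"] i by (auto simp: u_def)
      ultimately show "q (x i) = p (x i)" by (simp add: q_def)
    qed
    have qu: "q u = p y" by (simp add: q_def)
    have "\<exists>q'. q' permutes {..<2*n} \<and> Rc n c q' = Suc (Rc n c q)"
    proof (rule Suc.IH[OF m1 qperm])
      show "\<forall>i\<le>m. x' i < 2*n" using Suc.prems(3) uV by (auto simp: x'_def)
      show "inj_on x' {..m}"
        unfolding inj_on_def x'_def
        using inj by (auto simp: u_def) (metis Suc_n_not_le_n le_SucI nat_le_linear)+
      show "\<forall>i<m. c (x' i) (q (x' (Suc i))) = c (x' i) (q (x' i))"
      proof (intro allI impI)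
        fix i assume i: "i < m"
        show "c (x' i) (q (x' (Suc i))) = c (x' i) (q (x' i))"
        proof (cases "Suc i = m")
          case True
          then show ?thesis using i qx[OF i] qu Suc.prems(5) by (auto simp: x'_def y_def)
        next
          case False
          then have "Suc i < m" using i by simp
          then show ?thesis using i qx[OF i] qx[of "Suc i"] Suc.prems(5) by (auto simp: x'_def)
        qed
      qed
      show "\<not> c (x' m) (q (x' m))" using False qu by (simp add: x'_def)
      show "c (x' m) (q (x' 0))" using m1 qx[of 0] Suc.prems(7) by (simp add: x'_def u_def)
    qed
    then show ?thesis using Rq by simp
  qed
qed

lemma rtranclp_fpath:
  assumes "r\<^sup>*\<^sup>* v u"
  shows "\<exists>m x. x 0 = v \<and> x m = u \<and> (\<forall>i<m. r (x i) (x (Suc i)))"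
  using assms
proof (induction rule: rtranclp_induct)
  case base
  show ?case by (rule exI[of _ 0], rule exI[of _ "\<lambda>_. v"]) simp
next
  case (step y z)
  then obtain m x where h: "x 0 = v" "x m = y" "\<forall>i<m. r (x i) (x (Suc i))" by blast
  show ?case
    by (rule exI[of _ "Suc m"], rule exI[of _ "x(Suc m := z)"]) (use h step.hyps(2) in \<open>auto simp: less_Suc_eq\<close>)
qed

lemma rtranclp_fpath_inj:
  assumes "r\<^sup>*\<^sup>* v u"
  shows "\<exists>m x. x 0 = v \<and> x m = u \<and> (\<forall>i<m. r (x i) (x (Suc i))) \<and> inj_on x {..m}"
proof -
  let ?P = "\<lambda>m. \<exists>x. x 0 = v \<and> x m = u \<and> (\<forall>i<m. r (x i) (x (Suc i)))"
  have "\<exists>m. ?P m" using rtranclp_fpath[OF assms] by blast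
  then have "\<exists>m. ?P m \<and> (\<forall>k<m. \<not> ?P k)" by (rule exists_least_iff[THEN iffD1])
  then obtain m where Pm: "?P m" and minm: "\<And>k. k < m \<Longrightarrow> \<not> ?P k"
    by blast
  then obtain x where x0: "x 0 = v" and xm: "x m = u" and st: "\<forall>i<m. r (x i) (x (Suc i))" by blast
  have "inj_on x {..m}"
  proof (rule ccontr)
    assume "\<not> inj_on x {..m}"
    then obtain i j where ij: "i < j" "j \<le> m" "x i = x j"
      unfolding inj_on_def by (metis atMost_iff linorder_neqE_nat)
    define d where "d = j - i"
    define x' where "x' = (\<lambda>k. if k < i then x k else x (k + d))"
    have d0: "d > 0" using ij by (simp add: d_def)
    have "?P (m - d)"
    proof (intro exI conjI allI impI)
      show "x' 0 = v" using x0 ij by (cases "i = 0") (auto simp: x'_def d_def)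
      show "x' (m - d) = u" using xm ij by (auto simp: x'_def d_def)
      fix k assume k: "k < m - d"
      show "r (x' k) (x' (Suc k))"
      proof (cases "k < i")
        case True
        have "r (x k) (x (Suc k))" using st k by auto
        moreover have "x' (Suc k) = x (Suc k)"
          using True ij by (cases "Suc k = i") (auto simp: x'_def d_def)
        ultimately show ?thesis using True by (simp add: x'_def)
      next
        case False
        have "r (x (k + d)) (x (Suc (k + d)))" using st k by auto
        moreover have "x' k = x (k + d)" using False by (auto simp: x'_def)
        moreover have "x' (Suc k) = x (Suc (k + d))" using False by (auto simp: x'_def)
        ultimately show ?thesis by simp
      qed
    qed
    moreover have "m - d < m" using d0 ij by (simp add: d_def)
    ultimately show False using minm by blast
  qed
  then show ?thesis using x0 xm st by blast
qed

lemma card_filter_sum: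
  assumes "finite A"
  shows "card {x\<in>A. P x} = (\<Sum>x\<in>A. if P x then 1 else 0::nat)"
  using assms by (simp add: sum.If_cases Int_def conj_commute)

lemma double_count:
  fixes n :: nat and C :: "nat set"
  assumes bal: "bal n c" and p: "p permutes {..<2*n}" and C: "C \<subseteq> {..<2*n}"
    and rows: "\<And>a. a \<in> C \<Longrightarrow> {b. b < 2*n \<and> c a (p b)} \<subseteq> C"
    and w: "w < 2*n" "w \<notin> C" and b: "b \<in> C"
  shows "\<not> c w (p b)"
proof
  assume cw: "c w (p b)"
  have fin: "finite C" using C finite_subset by blast
  have row: "\<And>a. a \<in> C \<Longrightarrow> card {b\<in>C. c a (p b)} = n"
  proof -
    fix a assume a: "a \<in> C"
    have "{b\<in>C. c a (p b)} = {b. b < 2*n \<and> c a (p b)}" using rows[OF a] C by auto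
    also have "card \<dots> = card {j. j < 2*n \<and> c a j}" by (rule card_perm_pre[OF p])
    also have "\<dots> = n" using bal a C unfolding bal_def by auto
    finally show "card {b\<in>C. c a (p b)} = n" .
  qed
  have col: "\<And>b'. b' \<in> C \<Longrightarrow> card {a\<in>C. c a (p b')} \<le> n"
  proof -
    fix b' assume b': "b' \<in> C"
    have "p b' < 2*n" using permutes_in_image[OF p] b' C by auto
    then have "card {a. a < 2*n \<and> c a (p b')} = n" using bal unfolding bal_def by auto
    moreover have "{a\<in>C. c a (p b')} \<subseteq> {a. a < 2*n \<and> c a (p b')}" using C by auto
    moreover have "finite {a. a < 2*n \<and> c a (p b')}" by simp
    ultimately show "card {a\<in>C. c a (p b')} \<le> n" using card_mono by metis
  qed
  have colb: "card {a\<in>C. c a (p b)} < n"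
  proof -
    have "p b < 2*n" using permutes_in_image[OF p] b C by auto
    then have "card {a. a < 2*n \<and> c a (p b)} = n" using bal unfolding bal_def by auto
    moreover have "{a\<in>C. c a (p b)} \<subset> {a. a < 2*n \<and> c a (p b)}" using C w cw by auto
    moreover have "finite {a. a < 2*n \<and> c a (p b)}" by simp
    ultimately show ?thesis using psubset_card_mono by metis
  qed
  have "(\<Sum>a\<in>C. card {b\<in>C. c a (p b)}) = (\<Sum>a\<in>C. n)" using row by simp
  moreover have "(\<Sum>a\<in>C. card {b\<in>C. c a (p b)}) = (\<Sum>b\<in>C. card {a\<in>C. c a (p b)})"
  proof -
    have "(\<Sum>a\<in>C. card {b\<in>C. c a (p b)}) = (\<Sum>a\<in>C. \<Sum>b\<in>C. if c a (p b) then 1 else 0)"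
      by (rule sum.cong[OF refl], rule card_filter_sum[OF fin])
    also have "\<dots> = (\<Sum>b\<in>C. \<Sum>a\<in>C. if c a (p b) then 1 else 0)" by (rule sum.swap)
    also have "\<dots> = (\<Sum>b\<in>C. card {a\<in>C. c a (p b)})"
      by (rule sum.cong[OF refl], rule card_filter_sum[OF fin, symmetric])
    finally show ?thesis .
  qed
  moreover have "(\<Sum>b\<in>C. card {a\<in>C. c a (p b)}) < (\<Sum>b\<in>C. n)"
    by (rule sum_strict_mono_ex1[OF fin]) (use col colb b in auto)
  ultimately show False by simp
qed

lemma core:
  fixes n :: nat
  assumes bal: "bal n c" and p: "p permutes {..<2*n}" and lt: "Rc n c p < 2*n"
    and nb: "\<not> blockc n c"
  shows "\<exists>q. q permutes {..<2*n} \<and> Rc n c q = Suc (Rc n c p)"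
proof -
  define V where "V = {..<2*n}"
  define Z where "Z = (\<lambda>a b. a < 2*n \<and> b < 2*n \<and> (c a (p b) \<longleftrightarrow> c a (p a)))"
  define E where "E = (\<lambda>a. {b. b < 2*n \<and> (c a (p b) \<longleftrightarrow> c a (p a))})"
  have pV: "\<And>b. b < 2*n \<Longrightarrow> p b < 2*n" using permutes_in_image[OF p] by auto
  have rowc: "\<And>a. a < 2*n \<Longrightarrow> card {b. b < 2*n \<and> c a (p b)} = n"
    using bal card_perm_pre[OF p, of "\<lambda>j. c _ j"] unfolding bal_def by simp
  have rownc: "\<And>a. a < 2*n \<Longrightarrow> card {b. b < 2*n \<and> \<not> c a (p b)} = n"
  proof -
    fix a assume "a < 2*n"
    then show "card {b. b < 2*n \<and> \<not> c a (p b)} = n"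
      using bal card_perm_pre[OF p, of "\<lambda>j. \<not> c a j"] unfolding bal_def by simp
  qed
  have cardE: "\<And>a. a < 2*n \<Longrightarrow> card (E a) = n"
  proof -
    fix a assume a: "a < 2*n"
    show "card (E a) = n"
    proof (cases "c a (p a)")
      case True
      then have "E a = {b. b < 2*n \<and> c a (p b)}" by (auto simp: E_def)
      then show ?thesis using rowc[OF a] by simp
    next
      case False
      then have "E a = {b. b < 2*n \<and> \<not> c a (p b)}" by (auto simp: E_def)
      then show ?thesis using rownc[OF a] by simp
    qed
  qed
  have EV: "\<And>a. E a \<subseteq> V" by (auto simp: E_def V_def)
  have aE: "\<And>a. a < 2*n \<Longrightarrow> a \<in> E a" by (auto simp: E_def)
  have ZE: "\<And>a b. Z a b \<longleftrightarrow> a < 2*n \<and> b \<in> E a" by (auto simp: Z_def E_def)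
  have finV: "finite V" by (simp add: V_def)
  have cardV: "card V = 2*n" by (simp add: V_def)
  have good: "\<exists>u v. u < 2*n \<and> v < 2*n \<and> \<not> c u (p u) \<and> c u (p v) \<and> Z\<^sup>*\<^sup>* v u"
  proof (rule ccontr)
    assume H0: "\<not> ?thesis"
    have H: "\<And>u v. u < 2*n \<Longrightarrow> v < 2*n \<Longrightarrow> \<not> c u (p u) \<Longrightarrow> c u (p v) \<Longrightarrow> \<not> Z\<^sup>*\<^sup>* v u"
      using H0 by blast
    let ?cl = "\<lambda>C. C \<subseteq> V \<and> C \<noteq> {} \<and> (\<forall>a\<in>C. E a \<subseteq> C)"
    have "n > 0" using lt by simp
    then have "V \<noteq> {}" by (simp add: V_def lessThan_empty_iff)
    then have "?cl V" using EV by blast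
    then have "\<exists>C. ?cl C \<and> (\<forall>D. ?cl D \<longrightarrow> card C \<le> card D)"
      by (rule ex_has_least_nat)
    then obtain C where clC: "?cl C" and minC0: "\<forall>D. ?cl D \<longrightarrow> card C \<le> card D"
      by blast
    note minC = minC0[rule_format]
    have CV: "C \<subseteq> V" and Cne: "C \<noteq> {}" and CE: "\<And>a. a \<in> C \<Longrightarrow> E a \<subseteq> C" using clC by auto
    have finC: "finite C" using CV finV finite_subset by blast
    have strong: "\<And>a b. a \<in> C \<Longrightarrow> b \<in> C \<Longrightarrow> Z\<^sup>*\<^sup>* a b"
    proof -
      fix a b assume a: "a \<in> C" and b: "b \<in> C"
      define F where "F = {b. Z\<^sup>*\<^sup>* a b}"
      have FC: "F \<subseteq> C"
      proof
        fix y assume "y \<in> F"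
        then have "Z\<^sup>*\<^sup>* a y" by (simp add: F_def)
        then show "y \<in> C"
        proof (induction rule: rtranclp_induct)
          case base then show ?case using a .
        next
          case (step y z) then show ?case using CE ZE by blast
        qed
      qed
      have "?cl F"
      proof (intro conjI)
        show "F \<subseteq> V" using FC CV by blast
        show "F \<noteq> {}" by (auto simp: F_def)
        show "\<forall>y\<in>F. E y \<subseteq> F"
        proof (intro ballI subsetI)
          fix y z assume y: "y \<in> F" and z: "z \<in> E y"
          have "y < 2*n" using y FC CV by (auto simp: V_def)
          then have "Z y z" using z ZE by blast
          then show "z \<in> F" using y by (auto simp: F_def)
        qed
      qed
      then have "card C \<le> card F" by (rule minC)
      then have "F = C" using FC finC by (simp add: card_seteq)
      then show "Z\<^sup>*\<^sup>* a b" using b by (auto simp: F_def)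
    qed
    obtain a0 where a0: "a0 \<in> C" using Cne by blast
    have a0V: "a0 < 2*n" using a0 CV by (auto simp: V_def)
    have Cge: "n \<le> card C" using card_mono[OF finC CE[OF a0]] cardE[OF a0V] by simp
    have star: "\<And>i. i < 2*n \<Longrightarrow> E i = (if i \<in> C then C else V - C)"
    proof (cases "\<exists>u\<in>C. \<not> c u (p u)")
      case True
      then obtain u where uC: "u \<in> C" and nu: "\<not> c u (p u)" by blast
      have uV: "u < 2*n" using uC CV by (auto simp: V_def)
      have dis: "{v. v < 2*n \<and> c u (p v)} \<subseteq> V - C"
        using H[OF uV _ nu] strong[OF _ uC] by (auto simp: V_def)
      have "n \<le> card (V - C)" using rowc[OF uV] card_mono[OF _ dis] finV by simp
      moreover have "card (V - C) = 2*n - card C" using card_Diff_subset[OF finC CV] cardV by simp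
      ultimately have Cn: "card C = n" using Cge \<open>n > 0\<close> by linarith
      have EC: "\<And>a. a \<in> C \<Longrightarrow> E a = C"
      proof -
        fix a assume a: "a \<in> C"
        have aV: "a < 2*n" using a CV by (auto simp: V_def)
        show "E a = C" using card_seteq[OF finC CE[OF a]] cardE[OF aV] Cn by simp
      qed
      have cu: "\<And>w. w \<in> V - C \<Longrightarrow> c u (p w)"
        using EC[OF uC] nu by (auto simp: E_def V_def)
      have noarc: "\<And>w b. w \<in> V - C \<Longrightarrow> b \<in> E w \<Longrightarrow> b \<notin> C"
      proof
        fix w b assume w: "w \<in> V - C" and bE: "b \<in> E w" and bC: "b \<in> C"
        have "Z w b" using w bE ZE by (auto simp: V_def)
        then have "Z\<^sup>*\<^sup>* w u" using strong[OF bC uC] by (meson converse_rtranclp_into_rtranclp)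
        moreover have "w < 2*n" using w by (auto simp: V_def)
        ultimately show False using H[OF uV _ nu cu[OF w]] by blast
      qed
      have VCn: "card (V - C) = n" using card_Diff_subset[OF finC CV] cardV Cn by simp
      have EVC: "\<And>w. w \<in> V - C \<Longrightarrow> E w = V - C"
      proof -
        fix w assume w: "w \<in> V - C"
        have "E w \<subseteq> V - C" using noarc[OF w] EV by blast
        moreover have "card (E w) = n" using cardE w by (auto simp: V_def)
        ultimately show "E w = V - C" using VCn finV card_seteq[of "V - C" "E w"] by simp
      qed
      show "\<And>i. i < 2*n \<Longrightarrow> E i = (if i \<in> C then C else V - C)"
        using EC EVC by (auto simp: V_def)
    next
      case False
      then have allc: "\<And>a. a \<in> C \<Longrightarrow> c a (p a)" by blast
      have "\<exists>w. w < 2*n \<and> \<not> c w (p w)"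
      proof (rule ccontr)
        assume "\<not> (\<exists>w. w < 2*n \<and> \<not> c w (p w))"
        then have "{i. i < 2*n \<and> c i (p i)} = {..<2*n}" by auto
        then have "Rc n c p = 2*n" by (simp add: Rc_def)
        then show False using lt by simp
      qed
      then obtain w where wV: "w < 2*n" and nw: "\<not> c w (p w)" by blast
      have wC: "w \<notin> C" using allc nw by blast
      have rows: "\<And>a. a \<in> C \<Longrightarrow> {b. b < 2*n \<and> c a (p b)} \<subseteq> C"
        using CE allc by (auto simp: E_def)
      have nc: "\<And>w' b. w' < 2*n \<Longrightarrow> w' \<notin> C \<Longrightarrow> b \<in> C \<Longrightarrow> \<not> c w' (p b)"
        using double_count[OF bal p _ rows] CV by (simp add: V_def)
      have "C \<subseteq> {b. b < 2*n \<and> \<not> c w (p b)}" using nc[OF wV wC] CV by (auto simp: V_def)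
      moreover have "finite {b. b < 2*n \<and> \<not> c w (p b)}" by simp
      ultimately have "card C \<le> n" using rownc[OF wV] card_mono by metis
      then have Cn: "card C = n" using Cge by simp
      have EC: "\<And>a. a \<in> C \<Longrightarrow> E a = C"
      proof -
        fix a assume a: "a \<in> C"
        have aV: "a < 2*n" using a CV by (auto simp: V_def)
        show "E a = C" using card_seteq[OF finC CE[OF a]] cardE[OF aV] Cn by simp
      qed
      have EVC: "\<And>w'. w' < 2*n \<Longrightarrow> w' \<notin> C \<Longrightarrow> E w' = V - C"
      proof -
        fix w' assume w': "w' < 2*n" "w' \<notin> C"
        have sub: "C \<subseteq> {b. b < 2*n \<and> \<not> c w' (p b)}" using nc[OF w'] CV by (auto simp: V_def)
        have "finite {b. b < 2*n \<and> \<not> c w' (p b)}" by simp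
        then have eq: "C = {b. b < 2*n \<and> \<not> c w' (p b)}" using card_seteq[OF _ sub] rownc[OF w'(1)] Cn by simp
        then have "c w' (p w')" using w' by blast
        then show "E w' = V - C" using eq by (auto simp: E_def V_def)
      qed
      show "\<And>i. i < 2*n \<Longrightarrow> E i = (if i \<in> C then C else V - C)"
        using EC EVC by auto
    qed
    have "blockc n c"
      unfolding blockc_def
    proof (intro exI allI impI)
      fix i j assume i: "i < 2*n" and j: "j < 2*n"
      define b where "b = inv p j"
      have pb: "p b = j" using permutes_inverses(1)[OF p] by (simp add: b_def)
      have bV: "b < 2*n" using permutes_in_image[OF permutes_inv[OF p]] j by (auto simp: b_def)
      have jY: "j \<in> p ` C \<longleftrightarrow> b \<in> C"
        using inj_image_mem_iff[OF permutes_inj[OF p], of b C] pb by simp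
      have "b \<in> E i \<longleftrightarrow> (b \<in> C \<longleftrightarrow> i \<in> C)" using star[OF i] bV by (auto simp: V_def)
      then have "(c i (p b) \<longleftrightarrow> c i (p i)) \<longleftrightarrow> (b \<in> C \<longleftrightarrow> i \<in> C)" using bV by (simp add: E_def)
      then show "c i j \<longleftrightarrow> (i \<in> {i. i \<in> C \<longleftrightarrow> c i (p i)} \<longleftrightarrow> j \<in> p ` C)"
        using jY pb by auto
    qed
    then show False using nb by blast
  qed
  then obtain u v where uV: "u < 2*n" and vV: "v < 2*n" and nu: "\<not> c u (p u)"
    and cuv: "c u (p v)" and path: "Z\<^sup>*\<^sup>* v u" by blast
  obtain m x where x0: "x 0 = v" and xm: "x m = u" and st: "\<forall>i<m. Z (x i) (x (Suc i))"
    and inj: "inj_on x {..m}" using rtranclp_fpath_inj[OF path] by blast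
  have "v \<noteq> u" using nu cuv by blast
  then have m1: "1 \<le> m" using x0 xm by (cases m) auto
  show ?thesis
  proof (rule path_improve[OF m1 p _ inj])
    show "\<forall>i\<le>m. x i < 2*n"
      using st xm uV unfolding Z_def by (metis le_neq_implies_less)
    show "\<forall>i<m. c (x i) (p (x (Suc i))) = c (x i) (p (x i))" using st by (simp add: Z_def)
    show "\<not> c (x m) (p (x m))" using nu xm by simp
    show "c (x m) (p (x 0))" using cuv xm x0 by simp
  qed
qed

lemma Rc_sum:
  fixes n :: nat
  shows "Rc n (\<lambda>i j. \<not> c i j) p + Rc n c p = 2*n"
proof -
  have "{i. i < 2*n \<and> \<not> c i (p i)} \<union> {i. i < 2*n \<and> c i (p i)} = {..<2*n}" by auto
  moreover have "{i. i < 2*n \<and> \<not> c i (p i)} \<inter> {i. i < 2*n \<and> c i (p i)} = {}" by auto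
  ultimately have "card {i. i < 2*n \<and> \<not> c i (p i)} + card {i. i < 2*n \<and> c i (p i)} = card {..<2*n}"
    by (metis card_Un_disjoint finite_Collect_conjI finite_Collect_less_nat)
  then show ?thesis by (simp add: Rc_def)
qed

lemma reach_up:
  fixes n :: nat
  assumes up: "\<And>p. p permutes {..<2*n} \<Longrightarrow> Rc n c p < 2*n \<Longrightarrow> \<exists>q. q permutes {..<2*n} \<and> Rc n c q = Suc (Rc n c p)"
    and p0: "p0 permutes {..<2*n}"
  shows "Rc n c p0 + d \<le> 2*n \<Longrightarrow> \<exists>q. q permutes {..<2*n} \<and> Rc n c q = Rc n c p0 + d"
proof (induction d)
  case 0
  then show ?case using p0 by auto
next
  case (Suc d)
  then obtain q where q: "q permutes {..<2*n}" "Rc n c q = Rc n c p0 + d" by auto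
  then have "Rc n c q < 2*n" using Suc.prems by simp
  then obtain q' where "q' permutes {..<2*n}" "Rc n c q' = Suc (Rc n c q)" using up[OF q(1)] by blast
  then show ?case using q by auto
qed

lemma block_not_conn:
  fixes n :: nat
  assumes bal: "bal n blue" and n0: "0 < n" and bl: "blockc n blue"
  shows "\<not> blue_graph_connected n blue"
proof
  assume conn: "blue_graph_connected n blue"
  obtain X Y where XY: "\<And>i j. i < 2*n \<Longrightarrow> j < 2*n \<Longrightarrow> blue i j \<longleftrightarrow> (i \<in> X \<longleftrightarrow> j \<in> Y)"
    using bl unfolding blockc_def by blast
  define A where "A = Inl ` X \<union> Inr ` Y"
  have adjA: "\<And>a b. blue_adj n blue a b \<Longrightarrow> (a \<in> A \<longleftrightarrow> b \<in> A)"
  proof -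
    fix a b assume h: "blue_adj n blue a b"
    show "a \<in> A \<longleftrightarrow> b \<in> A"
    proof (cases a; cases b)
      fix i j assume "a = Inl i" "b = Inr j"
      then show ?thesis using h XY[of i j] by (auto simp: A_def)
    next
      fix i j assume "a = Inr j" "b = Inl i"
      then show ?thesis using h XY[of i j] by (auto simp: A_def)
    qed (use h in auto)
  qed
  have reachA: "\<And>a b. (blue_adj n blue)\<^sup>*\<^sup>* a b \<Longrightarrow> (a \<in> A \<longleftrightarrow> b \<in> A)"
  proof -
    fix a b assume "(blue_adj n blue)\<^sup>*\<^sup>* a b"
    then show "a \<in> A \<longleftrightarrow> b \<in> A"
      by (induction rule: rtranclp_induct) (use adjA in auto)
  qed
  have cn: "card {j. j < 2*n \<and> \<not> blue 0 j} = n" using bal n0 unfolding bal_def by auto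
  have "{j. j < 2*n \<and> \<not> blue 0 j} \<noteq> {}"
  proof
    assume "{j. j < 2*n \<and> \<not> blue 0 j} = {}"
    then have "card {j. j < 2*n \<and> \<not> blue 0 j} = 0" by (simp only: card.empty)
    then show False using cn n0 by simp
  qed
  then obtain j where j: "j < 2*n" "\<not> blue 0 j" by blast
  have i0: "(0::nat) < 2*n" using n0 by simp
  have diff: "Inl 0 \<in> A \<longleftrightarrow> Inr j \<notin> A" using XY[OF i0 j(1)] j(2) by (auto simp: A_def)
  have "Inl 0 \<in> bip_verts n" "Inr j \<in> bip_verts n" using i0 j by (auto simp: bip_verts_def)
  then have "(blue_adj n blue)\<^sup>*\<^sup>* (Inl 0) (Inr j)" using conn unfolding blue_graph_connected_def by blast
  then show False using reachA diff by blast
qed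

lemma gen_nonempty:
  fixes n :: nat and A B :: "nat set"
  assumes n0: "0 < n" and ne: "A \<noteq> {} \<or> B \<noteq> {}" and hA: "\<And>i. i \<in> A \<Longrightarrow> n \<le> card B"
      and hB: "\<And>j. j \<in> B \<Longrightarrow> n \<le> card A"
  shows "n \<le> card A \<and> n \<le> card B"
proof -
    have "B \<noteq> {}"
    proof
      assume B: "B = {}"
      then obtain i where "i \<in> A" using ne by blast
      then have "n \<le> card B" by (rule hA)
      then show False using B n0 by simp
    qed
    then obtain j where j: "j \<in> B" by blast
    have cA: "n \<le> card A" using hB[OF j] .
    then have "A \<noteq> {}" using n0 by (metis card.empty not_le)
    then obtain i where "i \<in> A" by blast
    then show "n \<le> card A \<and> n \<le> card B" using hA cA by blast
qed

lemma not_conn_block: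
  fixes n :: nat
  assumes bal: "bal n blue" and n0: "0 < n" and nc: "\<not> blue_graph_connected n blue"
  shows "\<exists>X Y. X \<subseteq> {..<2*n} \<and> Y \<subseteq> {..<2*n} \<and> card X = n \<and> card Y = n \<and>
           (\<forall>i<2*n. \<forall>j<2*n. blue i j \<longleftrightarrow> (i \<in> X \<longleftrightarrow> j \<in> Y))"
proof -
  obtain u v where u: "u \<in> bip_verts n" and v: "v \<in> bip_verts n" and nr: "\<not> (blue_adj n blue)\<^sup>*\<^sup>* u v"
    using nc unfolding blue_graph_connected_def by blast
  let ?R = "(blue_adj n blue)\<^sup>*\<^sup>*"
  define X where "X = {i. i < 2*n \<and> ?R u (Inl i)}"
  define Y where "Y = {j. j < 2*n \<and> ?R u (Inr j)}"
  define V where "V = {..<2*n}"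
  have XV: "X \<subseteq> V" and YV: "Y \<subseteq> V" by (auto simp: X_def Y_def V_def)
  have finV: "finite V" by (simp add: V_def)
  have cardV: "card V = 2*n" by (simp add: V_def)
  have F1: "\<And>i j. i < 2*n \<Longrightarrow> j < 2*n \<Longrightarrow> blue i j \<Longrightarrow> i \<in> X \<Longrightarrow> j \<in> Y"
  proof -
    fix i j assume h: "i < 2*n" "j < 2*n" "blue i j" "i \<in> X"
    have "?R u (Inl i)" using h(4) by (simp add: X_def)
    moreover have "blue_adj n blue (Inl i) (Inr j)" using h by simp
    ultimately have "?R u (Inr j)" by (rule rtranclp.rtrancl_into_rtrancl)
    then show "j \<in> Y" using h(2) by (simp add: Y_def)
  qed
  have F2: "\<And>i j. i < 2*n \<Longrightarrow> j < 2*n \<Longrightarrow> blue i j \<Longrightarrow> j \<in> Y \<Longrightarrow> i \<in> X"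
  proof -
    fix i j assume h: "i < 2*n" "j < 2*n" "blue i j" "j \<in> Y"
    have "?R u (Inr j)" using h(4) by (simp add: Y_def)
    moreover have "blue_adj n blue (Inr j) (Inl i)" using h by simp
    ultimately have "?R u (Inl i)" by (rule rtranclp.rtrancl_into_rtrancl)
    then show "i \<in> X" using h(1) by (simp add: X_def)
  qed
  have rowb: "\<And>i. i < 2*n \<Longrightarrow> card {j. j < 2*n \<and> blue i j} = n" using bal unfolding bal_def by auto
  have colb: "\<And>j. j < 2*n \<Longrightarrow> card {i. i < 2*n \<and> blue i j} = n" using bal unfolding bal_def by auto
  have finc: "\<And>P. finite {j::nat. j < 2*n \<and> P j}" by simp
  have s1: "\<And>i. i \<in> X \<Longrightarrow> n \<le> card Y"
  proof -
    fix i assume i: "i \<in> X"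
    then have "{j. j < 2*n \<and> blue i j} \<subseteq> Y" using F1 XV by (auto simp: V_def)
    then have "card {j. j < 2*n \<and> blue i j} \<le> card Y" by (rule card_mono[OF finite_subset[OF YV finV]])
    moreover have "i < 2*n" using i XV by (auto simp: V_def)
    ultimately show "n \<le> card Y" using rowb by simp
  qed
  have s2: "\<And>j. j \<in> Y \<Longrightarrow> n \<le> card X"
  proof -
    fix j assume j: "j \<in> Y"
    then have "{i. i < 2*n \<and> blue i j} \<subseteq> X" using F2 YV by (auto simp: V_def)
    then have "card {i. i < 2*n \<and> blue i j} \<le> card X" by (rule card_mono[OF finite_subset[OF XV finV]])
    moreover have "j < 2*n" using j YV by (auto simp: V_def)
    ultimately show "n \<le> card X" using colb by simp
  qed
  have s3: "\<And>i. i \<in> V - X \<Longrightarrow> n \<le> card (V - Y)"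
  proof -
    fix i assume i: "i \<in> V - X"
    then have "{j. j < 2*n \<and> blue i j} \<subseteq> V - Y" using F2 by (auto simp: V_def)
    then have "card {j. j < 2*n \<and> blue i j} \<le> card (V - Y)" by (rule card_mono[OF finite_Diff[OF finV]])
    moreover have "i < 2*n" using i by (auto simp: V_def)
    ultimately show "n \<le> card (V - Y)" using rowb by simp
  qed
  have s4: "\<And>j. j \<in> V - Y \<Longrightarrow> n \<le> card (V - X)"
  proof -
    fix j assume j: "j \<in> V - Y"
    then have "{i. i < 2*n \<and> blue i j} \<subseteq> V - X" using F1 by (auto simp: V_def)
    then have "card {i. i < 2*n \<and> blue i j} \<le> card (V - X)" by (rule card_mono[OF finite_Diff[OF finV]])
    moreover have "j < 2*n" using j by (auto simp: V_def)
    ultimately show "n \<le> card (V - X)" using colb by simp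
  qed
  have ne1: "X \<noteq> {} \<or> Y \<noteq> {}"
  proof (cases u)
    case (Inl i)
    then have "i < 2*n" using u by (auto simp: bip_verts_def)
    moreover have "?R u (Inl i)" using Inl by simp
    ultimately have "i \<in> X" by (simp add: X_def)
    then show ?thesis by blast
  next
    case (Inr j)
    then have "j < 2*n" using u by (auto simp: bip_verts_def)
    moreover have "?R u (Inr j)" using Inr by simp
    ultimately have "j \<in> Y" by (simp add: Y_def)
    then show ?thesis by blast
  qed
  have ne2: "V - X \<noteq> {} \<or> V - Y \<noteq> {}"
  proof (cases v)
    case (Inl i)
    then have "i < 2*n" using v by (auto simp: bip_verts_def)
    moreover have "\<not> ?R u (Inl i)" using Inl nr by simp
    ultimately have "i \<in> V - X" by (simp add: X_def V_def)
    then show ?thesis by blast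
  next
    case (Inr j)
    then have "j < 2*n" using v by (auto simp: bip_verts_def)
    moreover have "\<not> ?R u (Inr j)" using Inr nr by simp
    ultimately have "j \<in> V - Y" by (simp add: Y_def V_def)
    then show ?thesis by blast
  qed
  have cX: "n \<le> card X" "n \<le> card Y" using gen_nonempty[OF n0 ne1 s1 s2] by auto
  have cX': "n \<le> card (V - X)" "n \<le> card (V - Y)" using gen_nonempty[OF n0 ne2 s3 s4] by auto
  have dX: "card (V - X) = 2*n - card X" using card_Diff_subset[OF finite_subset[OF XV finV] XV] cardV by simp
  have dY: "card (V - Y) = 2*n - card Y" using card_Diff_subset[OF finite_subset[OF YV finV] YV] cardV by simp
  have cardX: "card X = n" using cX cX' dX n0 by linarith
  have cardY: "card Y = n" using cX cX' dY n0 by linarith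
  have blk: "\<forall>i<2*n. \<forall>j<2*n. blue i j \<longleftrightarrow> (i \<in> X \<longleftrightarrow> j \<in> Y)"
  proof (intro allI impI)
    fix i j assume i: "i < 2*n" and j: "j < 2*n"
    show "blue i j \<longleftrightarrow> (i \<in> X \<longleftrightarrow> j \<in> Y)"
    proof (cases "i \<in> X")
      case True
      have sub: "{j. j < 2*n \<and> blue i j} \<subseteq> Y" using F1 True i by blast
      have "{j. j < 2*n \<and> blue i j} = Y"
        using card_seteq[OF finite_subset[OF YV finV] sub] rowb[OF i] cardY by simp
      then show ?thesis using True j by auto
    next
      case False
      have sub: "{j. j < 2*n \<and> blue i j} \<subseteq> V - Y" using F2 False i by (auto simp: V_def)
      have "card (V - Y) = n" using dY cardY by simp
      then have "{j. j < 2*n \<and> blue i j} = V - Y"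
        using card_seteq[OF finite_Diff[OF finV] sub] rowb[OF i] by simp
      then show ?thesis using False j by (auto simp: V_def)
    qed
  qed
  show ?thesis using XV YV cardX cardY blk by (auto simp: V_def)
qed

lemma block_even:
  fixes n :: nat
  assumes XV: "X \<subseteq> {..<2*n}" and YV: "Y \<subseteq> {..<2*n}" and cXY: "card X = card Y"
    and blk: "\<forall>i<2*n. \<forall>j<2*n. blue i j \<longleftrightarrow> (i \<in> X \<longleftrightarrow> j \<in> Y)"
    and f: "f permutes {..<2*n}"
  shows "even (card {i. i < 2*n \<and> \<not> blue i (f i)})"
proof -
  have fV: "\<And>i. i < 2*n \<Longrightarrow> f i < 2*n" using permutes_in_image[OF f] by auto
  have finX: "finite X" using XV finite_subset by blast
  define a where "a = card {i\<in>X. f i \<in> Y}"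
  have e1: "{i. i < 2*n \<and> \<not> blue i (f i)} = {i\<in>X. f i \<notin> Y} \<union> {i. i < 2*n \<and> i \<notin> X \<and> f i \<in> Y}"
    using blk fV XV by auto
  have c1: "card {i\<in>X. f i \<notin> Y} = card X - a"
  proof -
    have "{i\<in>X. f i \<notin> Y} = X - {i\<in>X. f i \<in> Y}" by auto
    then show ?thesis using finX by (simp add: card_Diff_subset a_def)
  qed
  have c2: "card {i. i < 2*n \<and> i \<notin> X \<and> f i \<in> Y} = card Y - a"
  proof -
    have "{i. i < 2*n \<and> i \<notin> X \<and> f i \<in> Y} = {i. i < 2*n \<and> f i \<in> Y} - {i\<in>X. f i \<in> Y}"
      using XV by auto
    moreover have sub: "{i\<in>X. f i \<in> Y} \<subseteq> {i. i < 2*n \<and> f i \<in> Y}" using XV by auto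
    moreover have "card {i. i < 2*n \<and> f i \<in> Y} = card Y"
    proof -
      have "card {i. i < 2*n \<and> f i \<in> Y} = card {j. j < 2*n \<and> j \<in> Y}"
        by (rule card_perm_pre[OF f])
      also have "{j. j < 2*n \<and> j \<in> Y} = Y" using YV by auto
      finally show ?thesis .
    qed
    moreover have "finite {i\<in>X. f i \<in> Y}" using finX by simp
    ultimately show ?thesis using card_Diff_subset[OF _ sub] by (simp add: a_def)
  qed
  have aX: "a \<le> card X" unfolding a_def using finX by (intro card_mono) auto
  have "card {i. i < 2*n \<and> \<not> blue i (f i)} = card {i\<in>X. f i \<notin> Y} + card {i. i < 2*n \<and> i \<notin> X \<and> f i \<in> Y}"
    unfolding e1 by (rule card_Un_disjoint) (use finX in auto)
  then have "card {i. i < 2*n \<and> \<not> blue i (f i)} = 2 * (card X - a)" using c1 c2 cXY aX by simp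
  then show ?thesis by simp
qed

lemma match_to_perm:
  fixes n :: nat
  assumes M: "perfect_matching n M"
  shows "\<exists>f. f permutes {..<2*n} \<and> M = (\<lambda>i. (i, f i)) ` {..<2*n}"
proof -
  have MV: "M \<subseteq> {..<2*n} \<times> {..<2*n}" and row: "\<And>i. i < 2*n \<Longrightarrow> \<exists>!j. (i, j) \<in> M"
    and col: "\<And>j. j < 2*n \<Longrightarrow> \<exists>!i. (i, j) \<in> M"
    using M unfolding perfect_matching_def by auto
  define f where "f = (\<lambda>i. if i < 2*n then (THE j. (i, j) \<in> M) else i)"
  have fM: "\<And>i. i < 2*n \<Longrightarrow> (i, f i) \<in> M"
  proof -
    fix i assume i: "i < 2*n"
    have "(i, THE j. (i, j) \<in> M) \<in> M" using theI'[OF row[OF i]] .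
    then show "(i, f i) \<in> M" using i by (simp add: f_def)
  qed
  have fV: "\<And>i. i < 2*n \<Longrightarrow> f i < 2*n" using fM MV by blast
  have Meq: "M = (\<lambda>i. (i, f i)) ` {..<2*n}"
  proof
    show "M \<subseteq> (\<lambda>i. (i, f i)) ` {..<2*n}"
    proof
      fix x assume x: "x \<in> M"
      obtain i j where ij: "x = (i, j)" by (cases x)
      have i: "i < 2*n" using x ij MV by blast
      have "j = f i" using row[OF i] fM[OF i] x ij by blast
      then show "x \<in> (\<lambda>i. (i, f i)) ` {..<2*n}" using ij i by auto
    qed
    show "(\<lambda>i. (i, f i)) ` {..<2*n} \<subseteq> M" using fM by auto
  qed
  have "bij_betw f {..<2*n} {..<2*n}"
  proof (rule bij_betw_imageI)
    show "inj_on f {..<2*n}"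
    proof (rule inj_onI)
      fix i i' assume i: "i \<in> {..<2*n}" and i': "i' \<in> {..<2*n}" and e: "f i = f i'"
      have "(i, f i) \<in> M" using fM i by auto
      moreover have "(i', f i) \<in> M" using fM[of i'] i' e by auto
      moreover have "f i < 2*n" using fV i by simp
      ultimately show "i = i'" using col by blast
    qed
    show "f ` {..<2*n} = {..<2*n}"
    proof
      show "f ` {..<2*n} \<subseteq> {..<2*n}" using fV by auto
      show "{..<2*n} \<subseteq> f ` {..<2*n}"
      proof
        fix j assume j: "j \<in> {..<2*n}"
        then have "\<exists>i. (i, j) \<in> M" using col by blast
        then obtain i where i: "(i, j) \<in> M" by blast
        then have i2: "i < 2*n" using MV by blast
        have "f i = j" using row[OF i2] fM[OF i2] i by blast
        then show "j \<in> f ` {..<2*n}" using i2 by auto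
      qed
    qed
  qed
  moreover have "\<And>x. x \<notin> {..<2*n} \<Longrightarrow> f x = x" by (simp add: f_def)
  ultimately have "f permutes {..<2*n}" by (rule bij_imp_permutes)
  then show ?thesis using Meq by blast
qed

lemma graph_card:
  fixes n :: nat
  shows "card {(i, j) \<in> (\<lambda>i. (i, f i)) ` {..<2*n}. P i j} = card {i. i < 2*n \<and> P i (f i)}"
proof -
  have "{(i, j) \<in> (\<lambda>i. (i, f i)) ` {..<2*n}. P i j} = (\<lambda>i. (i, f i)) ` {i. i < 2*n \<and> P i (f i)}"
    by auto
  moreover have "inj_on (\<lambda>i. (i, f i)) {i. i < 2*n \<and> P i (f i)}" by (auto intro: inj_onI)
  ultimately show ?thesis by (simp add: card_image)
qed

lemma perm_matching:
  fixes n :: nat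
  assumes p: "p permutes {..<2*n}"
  shows "perfect_matching n ((\<lambda>i. (i, p i)) ` {..<2*n})"
proof -
  have pV: "\<And>i. i < 2*n \<Longrightarrow> p i < 2*n" using permutes_in_image[OF p] by auto
  have col: "\<And>j. j < 2*n \<Longrightarrow> \<exists>!i. (i, j) \<in> (\<lambda>i. (i, p i)) ` {..<2*n}"
  proof -
    fix j assume j: "j < 2*n"
    have e: "p (inv p j) = j" using permutes_inverses(1)[OF p] by simp
    have iv: "inv p j < 2*n" using permutes_in_image[OF permutes_inv[OF p]] j by auto
    show "\<exists>!i. (i, j) \<in> (\<lambda>i. (i, p i)) ` {..<2*n}"
    proof
      show "(inv p j, j) \<in> (\<lambda>i. (i, p i)) ` {..<2*n}" using e iv by (auto intro: image_eqI[of _ _ "inv p j"])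
      fix i assume "(i, j) \<in> (\<lambda>i. (i, p i)) ` {..<2*n}"
      then have "p i = j" by auto
      then show "i = inv p j" using permutes_inverses(2)[OF p] by metis
    qed
  qed
  show ?thesis unfolding perfect_matching_def using pV col by auto
qed

theorem corollary1:
  fixes k n :: nat and blue :: "nat \<Rightarrow> nat \<Rightarrow> bool"
  assumes "odd k" and "k \<le> 2*n"
    and "balanced_colouring n blue"
  shows "(\<exists>M. perfect_matching n M \<and>
              card {(i, j) \<in> M. \<not> blue i j} = k \<and>
              card {(i, j) \<in> M. blue i j} = 2*n - k)
         \<longleftrightarrow> blue_graph_connected n blue"
proof -
  have bal: "bal n blue" using assms(3) by (rule bal_blue)
  have n0: "0 < n" using assms(1,2) by (cases n) auto
  show ?thesis
  proof
    assume "\<exists>M. perfect_matching n M \<and>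
              card {(i, j) \<in> M. \<not> blue i j} = k \<and>
              card {(i, j) \<in> M. blue i j} = 2*n - k"
    then obtain M where M: "perfect_matching n M" and Mk: "card {(i, j) \<in> M. \<not> blue i j} = k" by blast
    obtain f where f: "f permutes {..<2*n}" and Mf: "M = (\<lambda>i. (i, f i)) ` {..<2*n}"
      using match_to_perm[OF M] by blast
    have "k = card {(i, j) \<in> M. \<not> blue i j}" using Mk by simp
    also have "\<dots> = card {(i, j) \<in> (\<lambda>i. (i, f i)) ` {..<2*n}. \<not> blue i j}" by (simp only: Mf)
    also have "\<dots> = card {i. i < 2*n \<and> \<not> blue i (f i)}" by (rule graph_card)
    finally have fk: "card {i. i < 2*n \<and> \<not> blue i (f i)} = k" by simp
    show "blue_graph_connected n blue"
    proof (rule ccontr)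
      assume "\<not> blue_graph_connected n blue"
      then obtain X Y where XY: "X \<subseteq> {..<2*n}" "Y \<subseteq> {..<2*n}" "card X = n" "card Y = n"
        "\<forall>i<2*n. \<forall>j<2*n. blue i j \<longleftrightarrow> (i \<in> X \<longleftrightarrow> j \<in> Y)"
        using not_conn_block[OF bal n0] by blast
      have "even (card {i. i < 2*n \<and> \<not> blue i (f i)})"
        by (rule block_even[OF XY(1,2) _ XY(5) f]) (use XY in simp)
      then show False using fk assms(1) by simp
    qed
  next
    assume conn: "blue_graph_connected n blue"
    have nb: "\<not> blockc n blue" using block_not_conn[OF bal n0] conn by blast
    have nr: "\<not> blockc n (\<lambda>i j. \<not> blue i j)"
    proof
      assume "blockc n (\<lambda>i j. \<not> blue i j)"
      then have "blockc n (\<lambda>i j. \<not> \<not> blue i j)" by (rule blockc_neg)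
      then show False using nb by simp
    qed
    have balr: "bal n (\<lambda>i j. \<not> blue i j)" using bal by (rule bal_neg)
    have upr: "\<And>p. p permutes {..<2*n} \<Longrightarrow> Rc n (\<lambda>i j. \<not> blue i j) p < 2*n \<Longrightarrow>
        \<exists>q. q permutes {..<2*n} \<and> Rc n (\<lambda>i j. \<not> blue i j) q = Suc (Rc n (\<lambda>i j. \<not> blue i j) p)"
      by (rule core[OF balr _ _ nr])
    have upb: "\<And>p. p permutes {..<2*n} \<Longrightarrow> Rc n blue p < 2*n \<Longrightarrow>
        \<exists>q. q permutes {..<2*n} \<and> Rc n blue q = Suc (Rc n blue p)"
      by (rule core[OF bal _ _ nb])
    have sum: "\<And>q. Rc n (\<lambda>i j. \<not> blue i j) q + Rc n blue q = 2*n" by (rule Rc_sum)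
    have "\<exists>q. q permutes {..<2*n} \<and> Rc n (\<lambda>i j. \<not> blue i j) q = k"
    proof (cases "Rc n (\<lambda>i j. \<not> blue i j) id \<le> k")
      case True
      have "\<exists>q. q permutes {..<2*n} \<and> Rc n (\<lambda>i j. \<not> blue i j) q = Rc n (\<lambda>i j. \<not> blue i j) id + (k - Rc n (\<lambda>i j. \<not> blue i j) id)"
        by (rule reach_up[OF upr permutes_id]) (use True assms(2) in auto)
      then show ?thesis using True by simp
    next
      case False
      have s0: "Rc n (\<lambda>i j. \<not> blue i j) id + Rc n blue id = 2*n" by (rule sum)
      have "\<exists>q. q permutes {..<2*n} \<and> Rc n blue q = Rc n blue id + (Rc n (\<lambda>i j. \<not> blue i j) id - k)"
        by (rule reach_up[OF upb permutes_id]) (use False s0 assms(2) in auto)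
      then obtain q where q: "q permutes {..<2*n}" "Rc n blue q = Rc n blue id + (Rc n (\<lambda>i j. \<not> blue i j) id - k)"
        by blast
      have "Rc n (\<lambda>i j. \<not> blue i j) q = k" using sum[of q] s0 q(2) False by linarith
      then show ?thesis using q(1) by blast
    qed
    then obtain q where q: "q permutes {..<2*n}" and qk: "Rc n (\<lambda>i j. \<not> blue i j) q = k" by blast
    have qb: "Rc n blue q = 2*n - k" using sum[of q] qk by simp
    show "\<exists>M. perfect_matching n M \<and>
              card {(i, j) \<in> M. \<not> blue i j} = k \<and>
              card {(i, j) \<in> M. blue i j} = 2*n - k"
    proof (intro exI conjI)
      show "perfect_matching n ((\<lambda>i. (i, q i)) ` {..<2*n})" by (rule perm_matching[OF q])
      have "card {(i, j) \<in> (\<lambda>i. (i, q i)) ` {..<2*n}. \<not> blue i j} = card {i. i < 2*n \<and> \<not> blue i (q i)}"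
        by (rule graph_card)
      also have "\<dots> = k" using qk by (simp only: Rc_def)
      finally show "card {(i, j) \<in> (\<lambda>i. (i, q i)) ` {..<2*n}. \<not> blue i j} = k" .
      have "card {(i, j) \<in> (\<lambda>i. (i, q i)) ` {..<2*n}. blue i j} = card {i. i < 2*n \<and> blue i (q i)}"
        by (rule graph_card)
      also have "\<dots> = 2*n - k" using qb by (simp only: Rc_def)
      finally show "card {(i, j) \<in> (\<lambda>i. (i, q i)) ` {..<2*n}. blue i j} = 2*n - k" .
    qed
  qed
qed


end
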